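(* Let $\Gamma\subseteq G_1$ be a subgroup acting freely on $\mathbb{H}^2$. Then $h(\Gamma)$ is abelian, and there exists a complex plane $\mathbb{C}_I=\mathbb{R}+\mathbb{R}I$ (for some imaginary unit $I\in\mathbb{H}$, $I^2=-1$) containing every $a\in\mathbb{H}$ such that $\begin{pmatrix}a&b\\0&1\end{pmatrix}\in h(\Gamma)$ for some $b\in\mathbb{H}$.
   Context: $G_1=\left\{\begin{pmatrix} a&b&r\\ 0&1&s\\ 0&0&1\end{pmatrix}: a,b,r,s\in\mathbb{H}, a\neq0\right\}$, acting on $(x,y)\in\mathbb{H}^2$ by $(x,y)\mapsto(ax+by+r,y+s)$. For such a matrix $A$, $h(A)=\begin{pmatrix}a&b\\0&1\end{pmatrix}$ is its holonomy part, and $h(\Gamma)=\{h(A):A\in\Gamma\}$. *)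

theory Defs
  imports Complex_Main "HOL-Algebra.Group"
begin

datatype quat = Quat (qr: real) (qi: real) (qj: real) (qk: real)

lemma quat_eqI: "qr x = qr y \<Longrightarrow> qi x = qi y \<Longrightarrow> qj x = qj y \<Longrightarrow> qk x = qk y \<Longrightarrow> x = y"
  by (cases x; cases y) auto

lemma quat_eq_iff: "x = y \<longleftrightarrow> qr x = qr y \<and> qi x = qi y \<and> qj x = qj y \<and> qk x = qk y"
  by (auto intro: quat_eqI)

instantiation quat :: ring_1
begin
definition "0 = Quat 0 0 0 0"
definition "1 = Quat 1 0 0 0"
definition "x + y = Quat (qr x + qr y) (qi x + qi y) (qj x + qj y) (qk x + qk y)"
definition "- x = Quat (- qr x) (- qi x) (- qj x) (- qk x)"
definition "x - y = Quat (qr x - qr y) (qi x - qi y) (qj x - qj y) (qk x - qk y)"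
definition "x * y = Quat
   (qr x * qr y - qi x * qi y - qj x * qj y - qk x * qk y)
   (qr x * qi y + qi x * qr y + qj x * qk y - qk x * qj y)
   (qr x * qj y - qi x * qk y + qj x * qr y + qk x * qi y)
   (qr x * qk y + qi x * qj y - qj x * qi y + qk x * qr y)"
instance
  by standard (auto simp: quat_eq_iff zero_quat_def one_quat_def plus_quat_def
      uminus_quat_def minus_quat_def times_quat_def algebra_simps)
end

instantiation quat :: real_algebra_1
begin
definition "scaleR c x = Quat (c * qr x) (c * qi x) (c * qj x) (c * qk x)"
instance
  by standard (auto simp: quat_eq_iff zero_quat_def one_quat_def plus_quat_def
      uminus_quat_def minus_quat_def times_quat_def scaleR_quat_def algebra_simps)
end

definition complex_plane :: "quat \<Rightarrow> quat set" where
  "complex_plane I = {of_real x + of_real y * I | x y. True}"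

text \<open>The matrix ((a,b,r),(0,1,s),(0,0,1)) is represented by the tuple (a,b,r,s).\<close>
type_synonym g1 = "quat \<times> quat \<times> quat \<times> quat"

definition g1_mult :: "g1 \<Rightarrow> g1 \<Rightarrow> g1" where
  "g1_mult A B = (case A of (a,b,r,s) \<Rightarrow> case B of (a',b',r',s') \<Rightarrow>
      (a * a', a * b' + b, a * r' + b * s' + r, s + s'))"

definition G1 :: "g1 monoid" where
  "G1 = \<lparr> carrier = {(a,b,r,s). a \<noteq> 0}, mult = g1_mult, one = (1,0,0,0) \<rparr>"

definition g1_act :: "g1 \<Rightarrow> quat \<times> quat \<Rightarrow> quat \<times> quat" where
  "g1_act A p = (case A of (a,b,r,s) \<Rightarrow> case p of (x,y) \<Rightarrow> (a*x + b*y + r, y + s))"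

definition acts_freely :: "g1 set \<Rightarrow> bool" where
  "acts_freely \<Gamma> \<longleftrightarrow> (\<forall>A\<in>\<Gamma>. \<forall>p. g1_act A p = p \<longrightarrow> A = \<one>\<^bsub>G1\<^esub>)"

text \<open>Holonomy part: the matrix ((a,b),(0,1)), represented by (a,b).\<close>
definition hol :: "g1 \<Rightarrow> quat \<times> quat" where
  "hol A = (case A of (a,b,r,s) \<Rightarrow> (a,b))"

definition hol_mult :: "quat \<times> quat \<Rightarrow> quat \<times> quat \<Rightarrow> quat \<times> quat" where
  "hol_mult P Q = (case P of (a,b) \<Rightarrow> case Q of (a',b') \<Rightarrow> (a * a', a * b' + b))"

end

theory Submission
  imports Defs
begin

definition qinv :: "quat \<Rightarrow> quat" where
 "qinv a = (let N = qr a ^ 2 + qi a ^ 2 + qj a ^ 2 + qk a ^ 2 in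
    Quat (qr a / N) (- qi a / N) (- qj a / N) (- qk a / N))"

lemma quat_nz_N: "a \<noteq> 0 \<Longrightarrow> qr a ^ 2 + qi a ^ 2 + qj a ^ 2 + qk a ^ 2 \<noteq> 0"
proof
  assume "a \<noteq> 0" "qr a ^ 2 + qi a ^ 2 + qj a ^ 2 + qk a ^ 2 = 0"
  hence "qr a = 0 \<and> qi a = 0 \<and> qj a = 0 \<and> qk a = 0"
    by (smt (verit) power2_less_0 power2_eq_square zero_le_power2 sum_power2_eq_zero_iff)
  thus False using \<open>a \<noteq> 0\<close> by (simp add: quat_eq_iff zero_quat_def)
qed

lemma qinv_left: "a \<noteq> 0 \<Longrightarrow> qinv a * a = 1"
proof -
  assume a: "a \<noteq> 0"
  define N where "N = qr a ^ 2 + qi a ^ 2 + qj a ^ 2 + qk a ^ 2"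
  have N: "N \<noteq> 0" using quat_nz_N[OF a] N_def by simp
  have e: "qinv a = Quat (qr a / N) (- qi a / N) (- qj a / N) (- qk a / N)"
    by (simp add: qinv_def N_def Let_def)
  show ?thesis unfolding e using N
    by (simp add: quat_eq_iff times_quat_def one_quat_def field_simps, simp add: N_def power2_eq_square algebra_simps)
qed

lemma qinv_right: "a \<noteq> 0 \<Longrightarrow> a * qinv a = 1"
proof -
  assume a: "a \<noteq> 0"
  define N where "N = qr a ^ 2 + qi a ^ 2 + qj a ^ 2 + qk a ^ 2"
  have N: "N \<noteq> 0" using quat_nz_N[OF a] N_def by simp
  have e: "qinv a = Quat (qr a / N) (- qi a / N) (- qj a / N) (- qk a / N)"
    by (simp add: qinv_def N_def Let_def)
  show ?thesis unfolding e using N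
    by (simp add: quat_eq_iff times_quat_def one_quat_def field_simps, simp add: N_def power2_eq_square algebra_simps)
qed

lemma mult_nz: "(a::quat) \<noteq> 0 \<Longrightarrow> b \<noteq> 0 \<Longrightarrow> a * b \<noteq> 0"
proof
  assume "a \<noteq> 0" "b \<noteq> 0" "a * b = 0"
  hence "qinv a * (a * b) = 0" by simp
  hence "b = 0" using qinv_left[OF \<open>a \<noteq> 0\<close>] by (simp add: mult.assoc[symmetric])
  thus False using \<open>b \<noteq> 0\<close> by simp
qed

lemma group_G1: "group G1"
proof (rule groupI)
  show "\<And>x y. x \<in> carrier G1 \<Longrightarrow> y \<in> carrier G1 \<Longrightarrow> x \<otimes>\<^bsub>G1\<^esub> y \<in> carrier G1"
    by (auto simp: G1_def g1_mult_def mult_nz)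
  show "\<one>\<^bsub>G1\<^esub> \<in> carrier G1" by (simp add: G1_def)
  show "\<And>x y z. x \<in> carrier G1 \<Longrightarrow> y \<in> carrier G1 \<Longrightarrow> z \<in> carrier G1 \<Longrightarrow>
     x \<otimes>\<^bsub>G1\<^esub> y \<otimes>\<^bsub>G1\<^esub> z = x \<otimes>\<^bsub>G1\<^esub> (y \<otimes>\<^bsub>G1\<^esub> z)"
    by (auto simp: G1_def g1_mult_def algebra_simps)
  show "\<And>x. x \<in> carrier G1 \<Longrightarrow> \<one>\<^bsub>G1\<^esub> \<otimes>\<^bsub>G1\<^esub> x = x"
    by (auto simp: G1_def g1_mult_def)
  show "\<And>x. x \<in> carrier G1 \<Longrightarrow> \<exists>y\<in>carrier G1. y \<otimes>\<^bsub>G1\<^esub> x = \<one>\<^bsub>G1\<^esub>"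
  proof -
    fix x assume "x \<in> carrier G1"
    then obtain a b r s where x: "x = (a,b,r,s)" "a \<noteq> 0" by (auto simp: G1_def)
    let ?a = "qinv a"
    let ?b = "- (qinv a * b)"
    let ?y = "(?a, ?b, - (?a * r + ?b * s), - s)"
    have "?a \<noteq> 0" using qinv_left[OF x(2)] by auto
    moreover have "?y \<otimes>\<^bsub>G1\<^esub> x = \<one>\<^bsub>G1\<^esub>"
      using qinv_left[OF x(2)] by (simp add: G1_def g1_mult_def x)
    ultimately show "\<exists>y\<in>carrier G1. y \<otimes>\<^bsub>G1\<^esub> x = \<one>\<^bsub>G1\<^esub>"
      by (intro bexI[of _ ?y]) (auto simp: G1_def)
  qed
qed

lemma free_s0:
  assumes fr: "acts_freely \<Gamma>" and Z: "(a,b,r,0) \<in> \<Gamma>"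
  shows "a = 1 \<and> b = 0"
proof (rule ccontr)
  assume H: "\<not> (a = 1 \<and> b = 0)"
  have one: "\<one>\<^bsub>G1\<^esub> = (1,0,0,0)" by (simp add: G1_def)
  show False
  proof (cases "a = 1")
    case False
    hence nz: "a - 1 \<noteq> 0" by simp
    define x where "x = - (qinv (a - 1) * r)"
    have "(a - 1) * x = - r" using qinv_right[OF nz]
      by (simp add: x_def mult.assoc[symmetric])
    hence "a * x + r = x" by (simp add: algebra_simps)
    hence "g1_act (a,b,r,0) (x,0) = (x,0)" by (simp add: g1_act_def)
    hence "(a,b,r,0) = \<one>\<^bsub>G1\<^esub>" using fr Z unfolding acts_freely_def by blast
    thus False using False one by simp
  next
    case True
    with H have nz: "b \<noteq> 0" by simp
    define y where "y = - (qinv b * r)"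
    have "b * y = - r" using qinv_right[OF nz]
      by (simp add: y_def mult.assoc[symmetric])
    hence "g1_act (a,b,r,0) (0,y) = (0,y)" using True by (simp add: g1_act_def)
    hence "(a,b,r,0) = \<one>\<^bsub>G1\<^esub>" using fr Z unfolding acts_freely_def by blast
    thus False using nz one by simp
  qed
qed

lemma hol_comm:
  assumes sg: "subgroup \<Gamma> G1" and fr: "acts_freely \<Gamma>" and A: "A \<in> \<Gamma>" and B: "B \<in> \<Gamma>"
  shows "hol_mult (hol A) (hol B) = hol_mult (hol B) (hol A)"
proof -
  interpret G: group G1 by (rule group_G1)
  have sub: "\<Gamma> \<subseteq> carrier G1" using sg by (rule subgroup.subset)
  define X where "X = A \<otimes>\<^bsub>G1\<^esub> B"
  define Y where "Y = B \<otimes>\<^bsub>G1\<^esub> A"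
  have XG: "X \<in> \<Gamma>" "Y \<in> \<Gamma>" using A B sg by (auto simp: X_def Y_def subgroup.m_closed)
  define Z where "Z = X \<otimes>\<^bsub>G1\<^esub> inv\<^bsub>G1\<^esub> Y"
  have ZG: "Z \<in> \<Gamma>" using XG sg by (auto simp: Z_def subgroup.m_closed subgroup.m_inv_closed)
  have ZY: "Z \<otimes>\<^bsub>G1\<^esub> Y = X" unfolding Z_def using XG sub
    by (simp add: G.m_assoc subsetD)
  obtain a b r s where Zd: "Z = (a,b,r,s)" by (cases Z) auto
  obtain a1 b1 r1 s1 where Ad: "A = (a1,b1,r1,s1)" by (cases A) auto
  obtain a2 b2 r2 s2 where Bd: "B = (a2,b2,r2,s2)" by (cases B) auto
  have "s + (s2 + s1) = s1 + s2" using ZY unfolding X_def Y_def Zd Ad Bd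
    by (simp add: G1_def g1_mult_def)
  hence "s = 0" by (simp add: algebra_simps)
  hence "a = 1 \<and> b = 0" using free_s0[OF fr] ZG Zd by simp
  hence "hol X = hol Y" using ZY[symmetric] unfolding Zd Y_def Ad Bd
    by (simp add: G1_def g1_mult_def hol_def)
  thus ?thesis unfolding X_def Y_def Ad Bd
    by (simp add: G1_def g1_mult_def hol_def hol_mult_def)
qed

lemma plane:
  fixes a0 a :: quat
  assumes v: "qi a0 \<noteq> 0 \<or> qj a0 \<noteq> 0 \<or> qk a0 \<noteq> 0"
    and c: "a * a0 = a0 * a"
  defines "n \<equiv> sqrt (qi a0 ^ 2 + qj a0 ^ 2 + qk a0 ^ 2)"
  defines "I \<equiv> Quat 0 (qi a0 / n) (qj a0 / n) (qk a0 / n)"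
  shows "I * I = -1" "a \<in> complex_plane I"
proof -
  define m where "m = qi a0 ^ 2 + qj a0 ^ 2 + qk a0 ^ 2"
  have mpos: "m > 0" using v unfolding m_def
    by (smt (verit) power2_less_0 not_sum_power2_lt_zero zero_less_power2)
  have nn: "n * n = m" using mpos by (simp add: n_def m_def)
  have npos: "n > 0" using mpos by (simp add: n_def m_def)
  have hm: "qi a0 / n * (qi a0 / n) + qj a0 / n * (qj a0 / n) + qk a0 / n * (qk a0 / n) = 1"
    using mpos by (simp add: nn add_divide_distrib[symmetric] m_def power2_eq_square)
  show "I * I = -1" unfolding I_def using hm
    by (simp add: quat_eq_iff times_quat_def one_quat_def uminus_quat_def algebra_simps)
  have c1: "qj a * qk a0 = qk a * qj a0" "qk a * qi a0 = qi a * qk a0" "qi a * qj a0 = qj a * qi a0"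
    using c by (simp_all add: quat_eq_iff times_quat_def, simp_all add: mult.commute)
  define d where "d = qi a * qi a0 + qj a * qj a0 + qk a * qk a0"
  have p1: "qi a * m = d * qi a0" "qj a * m = d * qj a0" "qk a * m = d * qk a0"
    unfolding m_def d_def using c1 by (simp_all add: power2_eq_square algebra_simps) (metis mult.commute mult.left_commute)+
  show "a \<in> complex_plane I"
    unfolding complex_plane_def
  proof (intro CollectI exI conjI)
    show "a = of_real (qr a) + of_real (d / n) * I" unfolding I_def using p1 npos nn mpos
      by (simp add: quat_eq_iff times_quat_def plus_quat_def of_real_def scaleR_quat_def one_quat_def field_simps)
  qed simp
qed

theorem mainTheorem9:
  fixes \<Gamma> :: "g1 set"
  assumes "subgroup \<Gamma> G1"
    and "acts_freely \<Gamma>"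
  shows "(\<forall>P\<in>hol ` \<Gamma>. \<forall>Q\<in>hol ` \<Gamma>. hol_mult P Q = hol_mult Q P)
    \<and> (\<exists>I::quat. I * I = -1 \<and> (\<forall>a b. (a, b) \<in> hol ` \<Gamma> \<longrightarrow> a \<in> complex_plane I))"
proof
  show C: "\<forall>P\<in>hol ` \<Gamma>. \<forall>Q\<in>hol ` \<Gamma>. hol_mult P Q = hol_mult Q P"
    using hol_comm[OF assms] by blast
  have ac: "a * a' = a' * a" if "(a, b) \<in> hol ` \<Gamma>" "(a', b') \<in> hol ` \<Gamma>" for a b a' b'
  proof -
    have "hol_mult (a, b) (a', b') = hol_mult (a', b') (a, b)" using C that by blast
    thus ?thesis by (simp add: hol_mult_def)
  qed
  show "\<exists>I::quat. I * I = -1 \<and> (\<forall>a b. (a, b) \<in> hol ` \<Gamma> \<longrightarrow> a \<in> complex_plane I)"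
  proof (cases "\<exists>a0 b0. (a0, b0) \<in> hol ` \<Gamma> \<and> (qi a0 \<noteq> 0 \<or> qj a0 \<noteq> 0 \<or> qk a0 \<noteq> 0)")
    case True
    then obtain a0 b0 where h: "(a0, b0) \<in> hol ` \<Gamma>" "qi a0 \<noteq> 0 \<or> qj a0 \<noteq> 0 \<or> qk a0 \<noteq> 0" by blast
    show ?thesis
      using plane[OF h(2)] ac[OF _ h(1)] by blast
  next
    case False
    let ?I = "Quat 0 1 0 0"
    have "?I * ?I = -1" by (simp add: quat_eq_iff times_quat_def one_quat_def uminus_quat_def)
    moreover have "a \<in> complex_plane ?I" if "(a, b) \<in> hol ` \<Gamma>" for a b
    proof -
      have "qi a = 0" "qj a = 0" "qk a = 0" using False that by auto
      hence "a = of_real (qr a) + of_real 0 * ?I"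
        by (simp add: quat_eq_iff plus_quat_def of_real_def scaleR_quat_def one_quat_def times_quat_def)
      thus ?thesis unfolding complex_plane_def by blast
    qed
    ultimately show ?thesis by blast
  qed
qed

end
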